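(* Let $F$ be a finite-dimensional subspace of $c_0$ which is an ideal in $c_0$. Then $F^*$ is (isometrically) a subspace of $\ell_1$ which is $k$-strictly convex for some $k\in\mathbb N$.
   Context: $c_0$ carries the sup norm and $c_0^*=\ell_1$. A closed subspace $Y$ of $X$ is an ideal in $X$ if there is a linear projection $P$ on $X^*$ with $\|P\|=1$ and $\ker P=Y^\perp=\{x^*\in X^*:x^*|_Y=0\}$; then $Y^*$ is isometric to the range of $P$. A normed space $E$ is $k$-strictly convex if for any $k+1$ linearly independent $x_1,\dots,x_{k+1}\in S_E$ one has $\|\sum_{i=1}^{k+1}x_i\|<k+1$. *)

theory Defs
  imports "HOL-Analysis.Analysis"
begin

definition c0 :: "(nat \<Rightarrow> real) set" where
  "c0 = {x. x \<longlonglongrightarrow> 0}"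

definition supnorm :: "(nat \<Rightarrow> real) \<Rightarrow> real" where
  "supnorm x = Sup (range (\<lambda>n. \<bar>x n\<bar>))"

definition l1 :: "(nat \<Rightarrow> real) set" where
  "l1 = {a. summable (\<lambda>n. \<bar>a n\<bar>)}"

definition l1norm :: "(nat \<Rightarrow> real) \<Rightarrow> real" where
  "l1norm a = (\<Sum>n. \<bar>a n\<bar>)"

text \<open>Duality pairing identifying the dual of c0 with l1.\<close>
definition pair :: "(nat \<Rightarrow> real) \<Rightarrow> (nat \<Rightarrow> real) \<Rightarrow> real" where
  "pair a x = (\<Sum>n. a n * x n)"

definition is_subspace :: "(nat \<Rightarrow> real) set \<Rightarrow> bool" where
  "is_subspace S \<longleftrightarrow> (\<lambda>n. 0) \<in> S \<and>
     (\<forall>x\<in>S. \<forall>y\<in>S. (\<lambda>n. x n + y n) \<in> S) \<and>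
     (\<forall>c. \<forall>x\<in>S. (\<lambda>n. c * x n) \<in> S)"

definition finite_dim :: "(nat \<Rightarrow> real) set \<Rightarrow> bool" where
  "finite_dim S \<longleftrightarrow> (\<exists>B. finite B \<and> S \<subseteq> {(\<lambda>n. \<Sum>b\<in>B. c b * b n) | c. True})"

definition closed_c0 :: "(nat \<Rightarrow> real) set \<Rightarrow> bool" where
  "closed_c0 Y \<longleftrightarrow> (\<forall>s x. (\<forall>j. s j \<in> Y) \<and> x \<in> c0 \<and>
       (\<lambda>j. supnorm (\<lambda>m. s j m - x m)) \<longlonglongrightarrow> 0 \<longrightarrow> x \<in> Y)"

definition annihilator :: "(nat \<Rightarrow> real) set \<Rightarrow> (nat \<Rightarrow> real) set" where
  "annihilator Y = {a \<in> l1. \<forall>y\<in>Y. pair a y = 0}"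

definition linear_on_l1 :: "((nat \<Rightarrow> real) \<Rightarrow> (nat \<Rightarrow> real)) \<Rightarrow> bool" where
  "linear_on_l1 P \<longleftrightarrow> (\<forall>a\<in>l1. \<forall>b\<in>l1. P (\<lambda>n. a n + b n) = (\<lambda>n. P a n + P b n)) \<and>
     (\<forall>c. \<forall>a\<in>l1. P (\<lambda>n. c * a n) = (\<lambda>n. c * P a n))"

definition opnorm_l1_eq_1 :: "((nat \<Rightarrow> real) \<Rightarrow> (nat \<Rightarrow> real)) \<Rightarrow> bool" where
  "opnorm_l1_eq_1 P \<longleftrightarrow> bdd_above {l1norm (P a) | a. a \<in> l1 \<and> l1norm a \<le> 1} \<and>
     Sup {l1norm (P a) | a. a \<in> l1 \<and> l1norm a \<le> 1} = 1"

definition is_ideal_c0 :: "(nat \<Rightarrow> real) set \<Rightarrow> bool" where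
  "is_ideal_c0 Y \<longleftrightarrow> Y \<subseteq> c0 \<and> is_subspace Y \<and> closed_c0 Y \<and>
     (\<exists>P. (\<forall>a\<in>l1. P a \<in> l1) \<and> linear_on_l1 P \<and> (\<forall>a\<in>l1. P (P a) = P a) \<and>
          opnorm_l1_eq_1 P \<and> {a \<in> l1. P a = (\<lambda>n. 0)} = annihilator Y)"

text \<open>Dual space of a finite-dimensional subspace F of c0: linear functionals on F
  (extended by 0 outside F), with the dual norm induced by the sup norm.\<close>
definition fdual :: "(nat \<Rightarrow> real) set \<Rightarrow> ((nat \<Rightarrow> real) \<Rightarrow> real) set" where
  "fdual F = {f. (\<forall>x\<in>F. \<forall>y\<in>F. f (\<lambda>n. x n + y n) = f x + f y) \<and>
                 (\<forall>c. \<forall>x\<in>F. f (\<lambda>n. c * x n) = c * f x) \<and>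
                 (\<forall>x. x \<notin> F \<longrightarrow> f x = 0)}"

definition dualnorm :: "(nat \<Rightarrow> real) set \<Rightarrow> ((nat \<Rightarrow> real) \<Rightarrow> real) \<Rightarrow> real" where
  "dualnorm F f = Sup {\<bar>f x\<bar> | x. x \<in> F \<and> supnorm x \<le> 1}"

definition k_strictly_convex_l1 :: "(nat \<Rightarrow> real) set \<Rightarrow> nat \<Rightarrow> bool" where
  "k_strictly_convex_l1 G k \<longleftrightarrow>
     (\<forall>x :: nat \<Rightarrow> nat \<Rightarrow> real.
        (\<forall>i\<le>k. x i \<in> G \<and> l1norm (x i) = 1) \<and>
        (\<forall>c. (\<lambda>n. \<Sum>i\<le>k. c i * x i n) = (\<lambda>n. 0) \<longrightarrow> (\<forall>i\<le>k. c i = 0))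
        \<longrightarrow> l1norm (\<lambda>n. \<Sum>i\<le>k. x i n) < real k + 1)"

end

theory Submission
  imports Defs "HOL-Library.Function_Algebras"
begin


instantiation "fun" :: (type, real_vector) real_vector
begin
definition scaleR_fun :: "real \<Rightarrow> ('a \<Rightarrow> 'b) \<Rightarrow> 'a \<Rightarrow> 'b" where
  "scaleR_fun c f = (\<lambda>x. c *\<^sub>R f x)"
instance by standard (auto simp: scaleR_fun_def plus_fun_def fun_eq_iff scaleR_add_right scaleR_add_left)
end

lemma scaleR_fun_apply [simp]: "(c *\<^sub>R f) x = c *\<^sub>R f x"
  by (simp add: scaleR_fun_def)

lemma fun_sum_apply: "(\<Sum>b\<in>B. (g b :: 'a \<Rightarrow> real)) n = (\<Sum>b\<in>B. g b n)"
  by (induction B rule: infinite_finite_induct) auto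

lemma lam_plus: "(\<lambda>n. x n + y n) = (x::nat\<Rightarrow>real) + y" by (simp add: fun_eq_iff)
lemma lam_scale: "(\<lambda>n. c * x n) = c *\<^sub>R (x::nat\<Rightarrow>real)" by (simp add: fun_eq_iff)
lemma lam_zero: "(\<lambda>n. 0) = (0::nat\<Rightarrow>real)" by (simp add: fun_eq_iff)

definition bnd :: "(nat \<Rightarrow> real) \<Rightarrow> bool" where "bnd x \<longleftrightarrow> (\<exists>B. \<forall>n. \<bar>x n\<bar> \<le> B)"

lemma c0_bnd: "x \<in> c0 \<Longrightarrow> bnd x"
proof -
  assume "x \<in> c0"
  then have "convergent x" unfolding c0_def convergent_def by auto
  then have "Bseq x" by (rule convergent_imp_Bseq)
  then obtain K where "\<forall>n. norm (x n) \<le> K" using BseqE by metis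
  then show ?thesis unfolding bnd_def by auto
qed

lemma bnd_add: "bnd x \<Longrightarrow> bnd y \<Longrightarrow> bnd (x + y)"
proof -
  assume "bnd x" "bnd y"
  then obtain A B where "\<forall>n. \<bar>x n\<bar> \<le> A" "\<forall>n. \<bar>y n\<bar> \<le> B" unfolding bnd_def by auto
  then have "\<forall>n. \<bar>(x + y) n\<bar> \<le> A + B"
    using abs_triangle_ineq by (metis add_mono order_trans plus_fun_apply)
  then show ?thesis unfolding bnd_def by blast
qed

lemma bnd_scale: "bnd x \<Longrightarrow> bnd (c *\<^sub>R x)"
proof -
  assume "bnd x"
  then obtain A where "\<forall>n. \<bar>x n\<bar> \<le> A" unfolding bnd_def by auto
  then have "\<forall>n. \<bar>(c *\<^sub>R x) n\<bar> \<le> \<bar>c\<bar> * A" by (simp add: abs_mult mult_left_mono)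
  then show ?thesis unfolding bnd_def by blast
qed

lemma bnd_zero: "bnd 0" unfolding bnd_def by auto

lemma subspace_bnd: "subspace {x. bnd x}"
  unfolding subspace_def using bnd_add bnd_scale bnd_zero by auto

lemma bnd_range: "bnd x \<Longrightarrow> bdd_above (range (\<lambda>n. \<bar>x n\<bar>))"
  unfolding bnd_def bdd_above_def by auto

lemma supnorm_ge: "bnd x \<Longrightarrow> \<bar>x n\<bar> \<le> supnorm x"
  unfolding supnorm_def by (rule cSup_upper) (auto dest: bnd_range)

lemma supnorm_le: "(\<And>n. \<bar>x n\<bar> \<le> B) \<Longrightarrow> supnorm x \<le> B"
  unfolding supnorm_def by (rule cSup_least) auto

lemma supnorm_nonneg: "bnd x \<Longrightarrow> 0 \<le> supnorm x"
  using supnorm_ge[of x 0] by linarith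

lemma supnorm_zero_iff: "bnd x \<Longrightarrow> supnorm x = 0 \<longleftrightarrow> x = 0"
proof
  assume "bnd x" "supnorm x = 0"
  then show "x = 0" using supnorm_ge[of x] by (auto simp: fun_eq_iff)
next
  assume "x = 0" then show "supnorm x = 0" unfolding supnorm_def by simp
qed

lemma supnorm_add: "bnd x \<Longrightarrow> bnd y \<Longrightarrow> supnorm (x + y) \<le> supnorm x + supnorm y"
  by (rule supnorm_le) (auto intro: abs_triangle_ineq[THEN order_trans] add_mono supnorm_ge)

lemma supnorm_scale: "bnd x \<Longrightarrow> supnorm (c *\<^sub>R x) = \<bar>c\<bar> * supnorm x"
proof (cases "c = 0")
  case True then show ?thesis unfolding supnorm_def by simp
next
  case False
  assume b: "bnd x"
  have 1: "supnorm (c *\<^sub>R x) \<le> \<bar>c\<bar> * supnorm x"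
    by (rule supnorm_le) (simp add: abs_mult mult_left_mono supnorm_ge[OF b])
  have "supnorm x = supnorm (inverse c *\<^sub>R (c *\<^sub>R x))" using False by simp
  also have "\<dots> \<le> \<bar>inverse c\<bar> * supnorm (c *\<^sub>R x)"
  proof (rule supnorm_le)
    fix n
    have "\<bar>c * x n\<bar> \<le> supnorm (c *\<^sub>R x)" using supnorm_ge[OF bnd_scale[OF b], of c n] by simp
    then have "\<bar>inverse c\<bar> * \<bar>c * x n\<bar> \<le> \<bar>inverse c\<bar> * supnorm (c *\<^sub>R x)" by (rule mult_left_mono) simp
    then show "\<bar>(inverse c *\<^sub>R (c *\<^sub>R x)) n\<bar> \<le> \<bar>inverse c\<bar> * supnorm (c *\<^sub>R x)"
      by (simp add: abs_mult)
  qed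
  finally have "\<bar>c\<bar> * supnorm x \<le> supnorm (c *\<^sub>R x)" using False
    by (simp add: abs_inverse field_simps)
  with 1 show ?thesis by linarith
qed

lemma supnorm_minus: "bnd x \<Longrightarrow> supnorm (- x) = supnorm x"
  using supnorm_scale[of x "-1"] by simp

lemma l1_add: "a \<in> l1 \<Longrightarrow> b \<in> l1 \<Longrightarrow> a + b \<in> l1"
  unfolding l1_def by (auto intro!: summable_comparison_test[where g="\<lambda>n. \<bar>a n\<bar> + \<bar>b n\<bar>"] summable_add)

lemma l1_scale: "a \<in> l1 \<Longrightarrow> c *\<^sub>R a \<in> l1"
  unfolding l1_def by (auto simp: abs_mult intro: summable_mult)

lemma l1_zero: "0 \<in> l1" unfolding l1_def by simp

lemma subspace_l1: "subspace l1"
  unfolding subspace_def using l1_add l1_scale l1_zero by auto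

lemma l1_diff: "a \<in> l1 \<Longrightarrow> b \<in> l1 \<Longrightarrow> a - b \<in> l1"
  using subspace_l1 by (rule subspace_diff)

lemma l1_sum: "(\<And>i. i \<in> I \<Longrightarrow> a i \<in> l1) \<Longrightarrow> (\<Sum>i\<in>I. a i) \<in> l1"
  using subspace_l1 by (rule subspace_sum)

lemma l1norm_nonneg: "a \<in> l1 \<Longrightarrow> 0 \<le> l1norm a"
  unfolding l1norm_def l1_def by (auto intro: suminf_nonneg)

lemma l1norm_add: "a \<in> l1 \<Longrightarrow> b \<in> l1 \<Longrightarrow> l1norm (a + b) \<le> l1norm a + l1norm b"
proof -
  assume a: "a \<in> l1" and b: "b \<in> l1"
  have sa: "summable (\<lambda>n. \<bar>a n\<bar>)" "summable (\<lambda>n. \<bar>b n\<bar>)" using a b unfolding l1_def by auto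
  have s: "summable (\<lambda>n. \<bar>(a + b) n\<bar>)"
    by (rule summable_comparison_test[where g="\<lambda>n. \<bar>a n\<bar> + \<bar>b n\<bar>"]) (auto intro!: summable_add sa)
  then have s': "summable (\<lambda>n. \<bar>a n + b n\<bar>)" by simp
  have "(\<Sum>n. \<bar>(a + b) n\<bar>) \<le> (\<Sum>n. \<bar>a n\<bar> + \<bar>b n\<bar>)"
    by (rule suminf_le) (auto intro: s s' summable_add sa abs_triangle_ineq)
  also have "\<dots> = (\<Sum>n. \<bar>a n\<bar>) + (\<Sum>n. \<bar>b n\<bar>)" by (rule suminf_add[symmetric]) (use sa in auto)
  finally show ?thesis unfolding l1norm_def .
qed

lemma l1norm_scale: "a \<in> l1 \<Longrightarrow> l1norm (c *\<^sub>R a) = \<bar>c\<bar> * l1norm a"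
  unfolding l1norm_def l1_def by (auto simp: abs_mult suminf_mult)

lemma l1norm_zero_iff: "a \<in> l1 \<Longrightarrow> l1norm a = 0 \<longleftrightarrow> a = 0"
  unfolding l1norm_def l1_def by (subst suminf_eq_zero_iff) (auto simp: fun_eq_iff)

lemma l1norm_sum: "(\<And>i. i \<in> I \<Longrightarrow> a i \<in> l1) \<Longrightarrow> l1norm (\<Sum>i\<in>I. a i) \<le> (\<Sum>i\<in>I. l1norm (a i))"
proof (induction I rule: infinite_finite_induct)
  case (infinite A) then show ?case unfolding l1norm_def by simp
next
  case empty then show ?case unfolding l1norm_def by simp
next
  case (insert x F)
  have ax: "a x \<in> l1" and aF: "\<And>i. i \<in> F \<Longrightarrow> a i \<in> l1" using insert.prems by auto
  have "l1norm (\<Sum>i\<in>insert x F. a i) = l1norm (a x + (\<Sum>i\<in>F. a i))" using insert.hyps by simp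
  also have "\<dots> \<le> l1norm (a x) + l1norm (\<Sum>i\<in>F. a i)" by (rule l1norm_add[OF ax l1_sum]) (rule aF)
  also have "\<dots> \<le> l1norm (a x) + (\<Sum>i\<in>F. l1norm (a i))" using insert.IH aF by simp
  also have "\<dots> = (\<Sum>i\<in>insert x F. l1norm (a i))" using insert.hyps by simp
  finally show ?case .
qed

lemma l1_fin: "(\<And>n. n \<ge> K \<Longrightarrow> a n = 0) \<Longrightarrow> a \<in> l1 \<and> l1norm a = (\<Sum>n<K. \<bar>a n\<bar>)"
proof -
  assume h: "\<And>n. n \<ge> K \<Longrightarrow> a n = 0"
  have "(\<lambda>n. \<bar>a n\<bar>) sums (\<Sum>n\<in>{..<K}. \<bar>a n\<bar>)"
    by (rule sums_finite) (use h in auto)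
  then show ?thesis unfolding l1_def l1norm_def by (auto simp: sums_iff)
qed



lemma pair_summable: "a \<in> l1 \<Longrightarrow> bnd x \<Longrightarrow> summable (\<lambda>n. a n * x n)"
proof -
  assume a: "a \<in> l1" and x: "bnd x"
  then obtain B where B: "\<forall>n. \<bar>x n\<bar> \<le> B" unfolding bnd_def by auto
  have sa: "summable (\<lambda>n. \<bar>a n\<bar> * B)" using a unfolding l1_def by (auto intro: summable_mult2)
  show ?thesis
    by (rule summable_comparison_test[OF _ sa]) (use B in \<open>auto simp: abs_mult intro!: exI[of _ 0] mult_left_mono\<close>)
qed

lemma pair_abs_summable: "a \<in> l1 \<Longrightarrow> bnd x \<Longrightarrow> summable (\<lambda>n. \<bar>a n * x n\<bar>)"
proof -
  assume a: "a \<in> l1" and x: "bnd x"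
  then obtain B where B: "\<forall>n. \<bar>x n\<bar> \<le> B" unfolding bnd_def by auto
  have sa: "summable (\<lambda>n. \<bar>a n\<bar> * B)" using a unfolding l1_def by (auto intro: summable_mult2)
  show ?thesis
    by (rule summable_comparison_test[OF _ sa]) (use B in \<open>auto simp: abs_mult intro!: exI[of _ 0] mult_left_mono\<close>)
qed

lemma pair_bound: "a \<in> l1 \<Longrightarrow> bnd x \<Longrightarrow> \<bar>pair a x\<bar> \<le> l1norm a * supnorm x"
proof -
  assume a: "a \<in> l1" and x: "bnd x"
  have sa: "summable (\<lambda>n. \<bar>a n\<bar>)" using a unfolding l1_def by auto
  have s1: "summable (\<lambda>n. \<bar>a n\<bar> * \<bar>x n\<bar>)" using pair_abs_summable[OF a x] by (simp add: abs_mult)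
  have "\<bar>pair a x\<bar> \<le> (\<Sum>n. \<bar>a n * x n\<bar>)" unfolding pair_def
    by (rule summable_rabs) (rule pair_abs_summable[OF a x])
  also have "\<dots> \<le> (\<Sum>n. \<bar>a n\<bar> * supnorm x)"
    by (rule suminf_le) (auto simp: abs_mult intro: mult_left_mono supnorm_ge[OF x] s1 summable_mult2 sa)
  also have "\<dots> = l1norm a * supnorm x" unfolding l1norm_def by (rule suminf_mult2[symmetric]) (rule sa)
  finally show ?thesis .
qed

lemma pair_add_left: "a \<in> l1 \<Longrightarrow> b \<in> l1 \<Longrightarrow> bnd x \<Longrightarrow> pair (a + b) x = pair a x + pair b x"
  unfolding pair_def by (simp add: distrib_right suminf_add pair_summable)

lemma pair_scale_left: "a \<in> l1 \<Longrightarrow> bnd x \<Longrightarrow> pair (c *\<^sub>R a) x = c * pair a x"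
  unfolding pair_def by (simp add: mult.assoc suminf_mult pair_summable)

lemma pair_diff_left: "a \<in> l1 \<Longrightarrow> b \<in> l1 \<Longrightarrow> bnd x \<Longrightarrow> pair (a - b) x = pair a x - pair b x"
  using pair_add_left[of a "(-1) *\<^sub>R b" x] pair_scale_left[of b x "-1"] l1_scale[of b "-1"] by simp

lemma pair_zero_left: "pair 0 x = 0" unfolding pair_def by simp

lemma pair_add_right: "a \<in> l1 \<Longrightarrow> bnd x \<Longrightarrow> bnd y \<Longrightarrow> pair a (x + y) = pair a x + pair a y"
  unfolding pair_def by (simp add: distrib_left suminf_add pair_summable)

lemma pair_scale_right: "a \<in> l1 \<Longrightarrow> bnd x \<Longrightarrow> pair a (c *\<^sub>R x) = c * pair a x"
proof -
  assume "a \<in> l1" "bnd x"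
  then have "summable (\<lambda>n. a n * x n)" by (rule pair_summable)
  then show ?thesis unfolding pair_def
    by (simp add: suminf_mult[symmetric] algebra_simps)
qed

lemma bnd_sum: "(\<And>i. i \<in> I \<Longrightarrow> bnd (x i)) \<Longrightarrow> bnd (\<Sum>i\<in>I. x i)"
  using subspace_sum[OF subspace_bnd, of I x] by auto

lemma pair_sum_left: "(\<And>i. i \<in> I \<Longrightarrow> a i \<in> l1) \<Longrightarrow> bnd x \<Longrightarrow> pair (\<Sum>i\<in>I. a i) x = (\<Sum>i\<in>I. pair (a i) x)"
proof (induction I rule: infinite_finite_induct)
  case (insert i I)
  have ai: "a i \<in> l1" and aI: "(\<Sum>i\<in>I. a i) \<in> l1" using insert.prems by (auto intro: l1_sum)
  show ?case unfolding sum.insert[OF insert.hyps] pair_add_left[OF ai aI insert.prems(2)]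
    using insert.IH insert.prems by simp
qed (auto simp: pair_zero_left)

lemma pair_sum_right: "(\<And>i. i \<in> I \<Longrightarrow> bnd (x i)) \<Longrightarrow> a \<in> l1 \<Longrightarrow> pair a (\<Sum>i\<in>I. x i) = (\<Sum>i\<in>I. pair a (x i))"
proof (induction I rule: infinite_finite_induct)
  case (insert i I)
  have xi: "bnd (x i)" and xI: "bnd (\<Sum>i\<in>I. x i)" using insert.prems by (auto intro: bnd_sum)
  show ?case unfolding sum.insert[OF insert.hyps] pair_add_right[OF insert.prems(2) xi xI]
    using insert.IH insert.prems by simp
qed (auto simp: pair_def)

definition ee :: "nat \<Rightarrow> nat \<Rightarrow> real" where "ee k = (\<lambda>n. if n = k then 1 else 0)"

lemma ee_l1: "ee k \<in> l1" using l1_fin[of "Suc k" "ee k"] by (auto simp: ee_def)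

lemma ee_bnd: "bnd (ee k)" unfolding bnd_def ee_def by (auto intro!: exI[of _ 1])

lemma pair_ee: "pair (ee k) x = x k"
proof -
  have "(\<lambda>n. if n = k then x n else 0) sums x k" by (rule sums_single)
  moreover have "(\<lambda>n. ee k n * x n) = (\<lambda>n. if n = k then x n else 0)" by (auto simp: ee_def)
  ultimately show ?thesis unfolding pair_def by (simp add: sums_iff)
qed

lemma biorth:
  assumes "finite Y" "independent Y" "\<forall>y\<in>Y. bnd y"
  shows "\<exists>u. (\<forall>y\<in>Y. u y \<in> l1) \<and> (\<forall>y\<in>Y. \<forall>y'\<in>Y. pair (u y) y' = (if y = y' then 1 else 0))"
  using assms
proof (induction Y rule: finite_induct)
  case empty then show ?case by auto
next
  case (insert y Y)
  have indY: "independent Y" by (rule independent_mono[OF insert.prems(1)]) auto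
  have ny: "y \<notin> span Y" using insert.prems(1) insert.hyps(2) by (simp add: independent_insert)
  have bY: "\<And>t. t \<in> Y \<Longrightarrow> bnd t" and yb: "bnd y" using insert.prems(2) by auto
  obtain u where ul1: "\<forall>t\<in>Y. u t \<in> l1"
    and ub: "\<forall>t1\<in>Y. \<forall>t2\<in>Y. pair (u t1) t2 = (if t1 = t2 then 1 else 0)"
    using insert.IH indY bY by auto
  define z where "z = y - (\<Sum>t\<in>Y. pair (u t) y *\<^sub>R t)"
  have "z \<noteq> 0"
  proof
    assume "z = 0"
    then have "y = (\<Sum>t\<in>Y. pair (u t) y *\<^sub>R t)" unfolding z_def by simp
    also have "\<dots> \<in> span Y" by (intro span_sum span_scale span_base)
    finally show False using ny by simp
  qed
  then obtain n where zn: "z n \<noteq> 0" by (auto simp: fun_eq_iff)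
  define w where "w = ee n - (\<Sum>t\<in>Y. t n *\<^sub>R u t)"
  have sl1: "(\<Sum>t\<in>Y. t n *\<^sub>R u t) \<in> l1" using ul1 by (auto intro!: l1_sum l1_scale)
  have wl1: "w \<in> l1" unfolding w_def using sl1 ee_l1 by (rule_tac l1_diff) auto
  have w0: "pair w t2 = 0" if t2: "t2 \<in> Y" for t2
  proof -
    have "pair w t2 = t2 n - (\<Sum>t\<in>Y. t n * pair (u t) t2)"
      unfolding w_def using ul1 bY[OF t2] ee_l1 sl1
      by (simp add: pair_diff_left pair_ee pair_sum_left l1_scale pair_scale_left)
    also have "(\<Sum>t\<in>Y. t n * pair (u t) t2) = (\<Sum>t\<in>Y. if t = t2 then t2 n else 0)"
      using ub t2 by (intro sum.cong) auto
    also have "\<dots> = t2 n" using t2 insert.hyps(1) by (simp add: sum.delta)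
    finally show ?thesis by simp
  qed
  have wy: "pair w y = z n"
  proof -
    have "pair w y = y n - (\<Sum>t\<in>Y. t n * pair (u t) y)"
      unfolding w_def using ul1 \<open>bnd y\<close> ee_l1 sl1
      by (simp add: pair_diff_left pair_ee pair_sum_left l1_scale pair_scale_left)
    also have "\<dots> = z n" unfolding z_def by (simp add: fun_sum_apply mult.commute)
    finally show ?thesis .
  qed
  define v where "v = (1 / z n) *\<^sub>R w"
  have vl1: "v \<in> l1" unfolding v_def using wl1 by (rule l1_scale)
  have v0: "\<And>t2. t2 \<in> Y \<Longrightarrow> pair v t2 = 0" unfolding v_def using wl1 bY w0 by (simp add: pair_scale_left)
  have v1: "pair v y = 1" unfolding v_def using wl1 wy zn yb by (simp add: pair_scale_left)
  define u' where "u' = (\<lambda>t. if t = y then v else u t - pair (u t) y *\<^sub>R v)"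
  have u'l1: "\<forall>t\<in>insert y Y. u' t \<in> l1" unfolding u'_def using ul1 vl1
    by (auto intro: l1_diff l1_scale)
  have "\<forall>t1\<in>insert y Y. \<forall>t2\<in>insert y Y. pair (u' t1) t2 = (if t1 = t2 then 1 else 0)"
  proof (intro ballI)
    fix t1 t2 assume t1: "t1 \<in> insert y Y" and t2: "t2 \<in> insert y Y"
    have bt2: "bnd t2" using t2 bY yb by auto
    show "pair (u' t1) t2 = (if t1 = t2 then 1 else 0)"
    proof (cases "t1 = y")
      case True
      then show ?thesis using t2 v0 v1 insert.hyps(2) unfolding u'_def by auto
    next
      case False
      then have t1Y: "t1 \<in> Y" using t1 by auto
      have "pair (u' t1) t2 = pair (u t1) t2 - pair (u t1) y * pair v t2"
        unfolding u'_def using False ul1 t1Y vl1 bt2 by (simp add: pair_diff_left pair_scale_left l1_scale)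
      then show ?thesis using t2 v0 v1 ub t1Y False insert.hyps(2) by auto
    qed
  qed
  then show ?case using u'l1 by blast
qed



definition linon :: "'a::real_vector set \<Rightarrow> ('a \<Rightarrow> real) \<Rightarrow> bool" where
  "linon S g \<longleftrightarrow> (\<forall>x\<in>S. \<forall>y\<in>S. g (x + y) = g x + g y) \<and> (\<forall>c. \<forall>x\<in>S. g (c *\<^sub>R x) = c * g x)"

lemma hb_step:
  fixes p :: "'a::real_vector \<Rightarrow> real"
  assumes W: "subspace W" and padd: "\<And>u v. u \<in> W \<Longrightarrow> v \<in> W \<Longrightarrow> p (u + v) \<le> p u + p v"
    and pscale: "\<And>c u. c \<ge> 0 \<Longrightarrow> u \<in> W \<Longrightarrow> p (c *\<^sub>R u) = c * p u"
    and S: "subspace S" "S \<subseteq> W" and z: "z \<in> W" and f: "linon S f" and fp: "\<And>x. x \<in> S \<Longrightarrow> f x \<le> p x"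
  shows "\<exists>g. linon (span (insert z S)) g \<and> (\<forall>x\<in>S. g x = f x) \<and> (\<forall>x\<in>span (insert z S). g x \<le> p x)"
proof (cases "z \<in> S")
  case True
  then have "span (insert z S) = S" using S by (simp add: insert_absorb)
  then show ?thesis using f fp by auto
next
  case False
  have spS: "span S = S" using S(1) by simp
  have rep: "span (insert z S) = {x + k *\<^sub>R z | x k. x \<in> S}"
  proof -
    have "{v. \<exists>k. v - k *\<^sub>R z \<in> S} = {x + k *\<^sub>R z | x k. x \<in> S}"
    proof (intro set_eqI iffI)
      fix v assume "v \<in> {v. \<exists>k. v - k *\<^sub>R z \<in> S}"
      then obtain k where "v - k *\<^sub>R z \<in> S" by auto
      moreover have "v = (v - k *\<^sub>R z) + k *\<^sub>R z" by simp
      ultimately show "v \<in> {x + k *\<^sub>R z | x k. x \<in> S}" by blast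
    next
      fix v assume "v \<in> {x + k *\<^sub>R z | x k. x \<in> S}"
      then obtain x k where "x \<in> S" "v = x + k *\<^sub>R z" by auto
      then have "v - k *\<^sub>R z \<in> S" by simp
      then show "v \<in> {v. \<exists>k. v - k *\<^sub>R z \<in> S}" by blast
    qed
    then show ?thesis unfolding span_insert spS by simp
  qed
  have uniq: "k = k'" if "x \<in> S" "x' \<in> S" "x + k *\<^sub>R z = x' + k' *\<^sub>R z" for x k x' k'
  proof (rule ccontr)
    assume "k \<noteq> k'"
    have "(k - k') *\<^sub>R z = x' - x" using that(3) by (simp add: algebra_simps)
    then have "(1 / (k - k')) *\<^sub>R ((k - k') *\<^sub>R z) = (1 / (k - k')) *\<^sub>R (x' - x)" by simp
    then have "z = (1 / (k - k')) *\<^sub>R (x' - x)" using \<open>k \<noteq> k'\<close> by simp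
    also have "\<dots> \<in> S" using that S(1) by (simp add: subspace_scale subspace_diff)
    finally show False using False by simp
  qed
  have SW: "\<And>x. x \<in> S \<Longrightarrow> x \<in> W" using S(2) by auto
  have f0: "f 0 = 0" using f subspace_0[OF S(1)] unfolding linon_def by (metis scale_zero_left mult_zero_left)
  have key: "f x - p (x - z) \<le> p (y + z) - f y" if "x \<in> S" "y \<in> S" for x y
  proof -
    have "f x + f y = f (x + y)" using f that unfolding linon_def by auto
    also have "\<dots> \<le> p (x + y)" using fp that S(1) by (simp add: subspace_add)
    also have "x + y = (x - z) + (y + z)" by simp
    also have "p \<dots> \<le> p (x - z) + p (y + z)" using that z W SW by (intro padd) (auto simp: subspace_diff subspace_add)
    finally show ?thesis by simp
  qed
  define A where "A = {f x - p (x - z) | x. x \<in> S}"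
  define c where "c = Sup A"
  have A_ne: "A \<noteq> {}" unfolding A_def using subspace_0[OF S(1)] by auto
  have A_bdd: "bdd_above A" unfolding A_def bdd_above_def
    using key[OF _ subspace_0[OF S(1)]] by blast
  have c1: "f x - p (x - z) \<le> c" if "x \<in> S" for x
    unfolding c_def using that by (intro cSup_upper A_bdd) (auto simp: A_def)
  have c2: "c \<le> p (y + z) - f y" if "y \<in> S" for y
    unfolding c_def using A_ne key that by (intro cSup_least) (auto simp: A_def)
  define kk where "kk v = (SOME k. v - k *\<^sub>R z \<in> S)" for v
  define g where "g v = f (v - kk v *\<^sub>R z) + kk v * c" for v
  have gval: "g (x + k *\<^sub>R z) = f x + k * c" if "x \<in> S" for x k
  proof -
    have "(x + k *\<^sub>R z) - k *\<^sub>R z \<in> S" using that by simp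
    then have h: "(x + k *\<^sub>R z) - kk (x + k *\<^sub>R z) *\<^sub>R z \<in> S" unfolding kk_def by (rule someI)
    have "x + k *\<^sub>R z = ((x + k *\<^sub>R z) - kk (x + k *\<^sub>R z) *\<^sub>R z) + kk (x + k *\<^sub>R z) *\<^sub>R z" by simp
    then have "k = kk (x + k *\<^sub>R z)" using uniq[OF that h] by blast
    then show ?thesis unfolding g_def by (metis add_diff_cancel_right')
  qed
  have bound: "f x + k * c \<le> p (x + k *\<^sub>R z)" if x: "x \<in> S" for x k
  proof -
    consider "k > 0" | "k < 0" | "k = 0" by linarith
    then show ?thesis
    proof cases
      case 1
      have xs: "(1 / k) *\<^sub>R x \<in> S" using x S(1) by (simp add: subspace_scale)
      have "c \<le> p ((1 / k) *\<^sub>R x + z) - f ((1 / k) *\<^sub>R x)" by (rule c2[OF xs])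
      also have "f ((1 / k) *\<^sub>R x) = (1 / k) * f x" using f x unfolding linon_def by auto
      also have "p ((1 / k) *\<^sub>R x + z) = (1 / k) * p (x + k *\<^sub>R z)"
      proof -
        have "(1 / k) *\<^sub>R x + z = (1 / k) *\<^sub>R (x + k *\<^sub>R z)" using 1 by (simp add: algebra_simps)
        moreover have "x + k *\<^sub>R z \<in> W" using x SW z W by (simp add: subspace_add subspace_scale)
        ultimately show ?thesis using pscale 1 by simp
      qed
      finally have "c \<le> (1 / k) * p (x + k *\<^sub>R z) - (1 / k) * f x" .
      then have "k * c \<le> k * ((1 / k) * p (x + k *\<^sub>R z) - (1 / k) * f x)" using 1 by (simp add: mult_left_mono)
      then show ?thesis using 1 by (simp add: algebra_simps)
    next
      case 2
      define t where "t = - k"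
      have t: "t > 0" using 2 unfolding t_def by simp
      have xs: "(1 / t) *\<^sub>R x \<in> S" using x S(1) by (simp add: subspace_scale)
      have "f ((1 / t) *\<^sub>R x) - p ((1 / t) *\<^sub>R x - z) \<le> c" by (rule c1[OF xs])
      also have "f ((1 / t) *\<^sub>R x) = (1 / t) * f x" using f x unfolding linon_def by auto
      also have "p ((1 / t) *\<^sub>R x - z) = (1 / t) * p (x + k *\<^sub>R z)"
      proof -
        have "(1 / t) *\<^sub>R x - z = (1 / t) *\<^sub>R (x + k *\<^sub>R z)" using t unfolding t_def by (simp add: algebra_simps)
        moreover have "x + k *\<^sub>R z \<in> W" using x SW z W by (simp add: subspace_add subspace_scale)
        ultimately show ?thesis using pscale t by simp
      qed
      finally have "(1 / t) * f x - (1 / t) * p (x + k *\<^sub>R z) \<le> c" .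
      then have "t * ((1 / t) * f x - (1 / t) * p (x + k *\<^sub>R z)) \<le> t * c" using t by (simp add: mult_left_mono)
      then show ?thesis using t unfolding t_def by (simp add: algebra_simps)
    next
      case 3
      then show ?thesis using fp x by simp
    qed
  qed
  have glin: "linon (span (insert z S)) g"
    unfolding linon_def rep
  proof (intro conjI ballI allI)
    fix v w assume "v \<in> {x + k *\<^sub>R z | x k. x \<in> S}" "w \<in> {x + k *\<^sub>R z | x k. x \<in> S}"
    then obtain x k x' k' where xk: "x \<in> S" "v = x + k *\<^sub>R z" "x' \<in> S" "w = x' + k' *\<^sub>R z" by auto
    have "v + w = (x + x') + (k + k') *\<^sub>R z" using xk by (simp add: algebra_simps)
    moreover have "x + x' \<in> S" using xk S(1) by (simp add: subspace_add)
    ultimately have "g (v + w) = f (x + x') + (k + k') * c" using gval by simp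
    also have "\<dots> = g v + g w" using xk gval f unfolding linon_def by (simp add: algebra_simps)
    finally show "g (v + w) = g v + g w" .
  next
    fix a v assume "v \<in> {x + k *\<^sub>R z | x k. x \<in> S}"
    then obtain x k where xk: "x \<in> S" "v = x + k *\<^sub>R z" by auto
    have "a *\<^sub>R v = (a *\<^sub>R x) + (a * k) *\<^sub>R z" using xk by (simp add: algebra_simps)
    moreover have "a *\<^sub>R x \<in> S" using xk S(1) by (simp add: subspace_scale)
    ultimately have "g (a *\<^sub>R v) = f (a *\<^sub>R x) + (a * k) * c" using gval by simp
    also have "\<dots> = a * g v" using xk gval f unfolding linon_def by (simp add: algebra_simps)
    finally show "g (a *\<^sub>R v) = a * g v" .
  qed
  have gf: "\<forall>x\<in>S. g x = f x" using gval[of _ 0] by simp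
  have gp: "\<forall>v\<in>span (insert z S). g v \<le> p v" unfolding rep using gval bound by auto
  show ?thesis using glin gf gp by blast
qed

lemma span_insert_span: "span (insert z (span A)) = span (insert z A)"
  by (simp add: span_insert span_span)

lemma hb_fin:
  fixes p :: "'a::real_vector \<Rightarrow> real"
  assumes W: "subspace W" and padd: "\<And>u v. u \<in> W \<Longrightarrow> v \<in> W \<Longrightarrow> p (u + v) \<le> p u + p v"
    and pscale: "\<And>c u. c \<ge> 0 \<Longrightarrow> u \<in> W \<Longrightarrow> p (c *\<^sub>R u) = c * p u"
    and S: "subspace S" "S \<subseteq> W" and f: "linon S f" and fp: "\<And>x. x \<in> S \<Longrightarrow> f x \<le> p x"
    and Z: "finite Z" "Z \<subseteq> W"
  shows "\<exists>g. linon (span (Z \<union> S)) g \<and> (\<forall>x\<in>S. g x = f x) \<and> (\<forall>x\<in>span (Z \<union> S). g x \<le> p x)"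
  using Z
proof (induction Z rule: finite_induct)
  case empty
  have e: "span ({} \<union> S) = S" using S(1) by simp
  show ?case unfolding e using f fp by blast
next
  case (insert z Z)
  then obtain g0 where g0: "linon (span (Z \<union> S)) g0" "\<forall>x\<in>S. g0 x = f x" "\<forall>x\<in>span (Z \<union> S). g0 x \<le> p x"
    by auto
  have sub: "span (Z \<union> S) \<subseteq> W" using insert.prems S(2) W by (intro span_minimal) auto
  have zW: "z \<in> W" using insert.prems by auto
  obtain g where g: "linon (span (insert z (span (Z \<union> S)))) g"
      "\<forall>x\<in>span (Z \<union> S). g x = g0 x" "\<forall>x\<in>span (insert z (span (Z \<union> S))). g x \<le> p x"
    using hb_step[OF W padd pscale subspace_span sub zW g0(1)] g0(3) by blast
  have e: "span (insert z (span (Z \<union> S))) = span (insert z Z \<union> S)"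
    by (simp add: span_insert_span)
  have h: "\<forall>x\<in>S. g x = f x"
  proof
    fix x assume x: "x \<in> S"
    then have "x \<in> span (Z \<union> S)" by (meson UnI2 span_base)
    then show "g x = f x" using g(2) g0(2) x by simp
  qed
  show ?case apply (rule exI[of _ g]) using g h unfolding e by simp
qed



lemma linon_sum:
  assumes "linon S g" "subspace S" "\<And>i. i \<in> I \<Longrightarrow> a i \<in> S"
  shows "g (\<Sum>i\<in>I. a i) = (\<Sum>i\<in>I. g (a i))"
  using assms(3)
proof (induction I rule: infinite_finite_induct)
  case (infinite A)
  have "g 0 = g (0 *\<^sub>R 0)" by simp
  also have "\<dots> = 0" using assms(1,2) subspace_0 unfolding linon_def by fastforce
  finally show ?case using infinite by simp
next
  case empty
  have "g 0 = g (0 *\<^sub>R 0)" by simp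
  also have "\<dots> = 0" using assms(1,2) subspace_0 unfolding linon_def by fastforce
  finally show ?case by simp
next
  case (insert i I)
  have ai: "a i \<in> S" and aI: "(\<Sum>i\<in>I. a i) \<in> S" using insert.prems assms(2) by (auto intro: subspace_sum)
  have "g (\<Sum>i\<in>insert i I. a i) = g (a i + (\<Sum>i\<in>I. a i))" unfolding sum.insert[OF insert.hyps] ..
  also have "\<dots> = g (a i) + g (\<Sum>i\<in>I. a i)" using assms(1) ai aI unfolding linon_def by blast
  finally show ?case using insert by simp
qed

lemma vlin_sum:
  fixes P :: "(nat \<Rightarrow> real) \<Rightarrow> (nat \<Rightarrow> real)"
  assumes add: "\<And>a b. a \<in> V \<Longrightarrow> b \<in> V \<Longrightarrow> P (a + b) = P a + P b"
    and P0: "P 0 = 0" and V: "subspace V" and a: "\<And>i. i \<in> I \<Longrightarrow> a i \<in> V"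
  shows "P (\<Sum>i\<in>I. a i) = (\<Sum>i\<in>I. P (a i))"
  using a
proof (induction I rule: infinite_finite_induct)
  case (insert i I)
  have ai: "a i \<in> V" and aI: "(\<Sum>i\<in>I. a i) \<in> V" using insert.prems V by (auto intro: subspace_sum)
  have "P (\<Sum>i\<in>insert i I. a i) = P (a i + (\<Sum>i\<in>I. a i))" unfolding sum.insert[OF insert.hyps] ..
  also have "\<dots> = P (a i) + P (\<Sum>i\<in>I. a i)" using add ai aI by blast
  finally have e1: "P (\<Sum>i\<in>insert i I. a i) = P (a i) + P (\<Sum>i\<in>I. a i)" .
  have e2: "P (\<Sum>i\<in>I. a i) = (\<Sum>i\<in>I. P (a i))" by (rule insert.IH) (use insert.prems in auto)
  have e3: "(\<Sum>i\<in>insert i I. P (a i)) = P (a i) + (\<Sum>i\<in>I. P (a i))" by (rule sum.insert[OF insert.hyps])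
  show ?case by (simp only: e1 e2 e3)
qed (use P0 in auto)

lemma sgn_times_self: "sgn (r::real) * r = \<bar>r\<bar>"
  by (cases "r > 0"; cases "r < 0") auto

lemma tail_lim:
  assumes y: "y \<in> c0"
  shows "(\<lambda>M. supnorm (\<lambda>n. if n < M then 0 else y n)) \<longlonglongrightarrow> 0"
proof (rule LIMSEQ_I)
  fix r :: real assume r: "r > 0"
  have "y \<longlonglongrightarrow> 0" using y unfolding c0_def by simp
  then obtain no where no: "\<And>n. n \<ge> no \<Longrightarrow> norm (y n - 0) < r / 2"
    using LIMSEQ_D[of y 0 "r / 2"] r by auto
  show "\<exists>no. \<forall>M\<ge>no. norm (supnorm (\<lambda>n. if n < M then 0 else y n) - 0) < r"
  proof (intro exI allI impI)
    fix M assume M: "M \<ge> no"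
    have b: "\<bar>if n < M then 0 else y n\<bar> \<le> r / 2" for n
    proof (cases "n < M")
      case True then show ?thesis using r by simp
    next
      case False then have "no \<le> n" using M by simp
      then show ?thesis using no[of n] False by simp
    qed
    then have "supnorm (\<lambda>n. if n < M then 0 else y n) \<le> r / 2" by (rule supnorm_le)
    moreover have "0 \<le> supnorm (\<lambda>n. if n < M then 0 else y n)"
    proof -
      have "bnd (\<lambda>n. if n < M then 0 else y n)" unfolding bnd_def using b by blast
      then show ?thesis by (rule supnorm_nonneg)
    qed
    ultimately show "norm (supnorm (\<lambda>n. if n < M then 0 else y n) - 0) < r" using r by simp
  qed
qed



theorem theorem4p15:
  fixes F :: "(nat \<Rightarrow> real) set"
  assumes "F \<subseteq> c0" and "is_subspace F" and "finite_dim F" and "is_ideal_c0 F"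
  shows "\<exists>G T k. G \<subseteq> l1 \<and> is_subspace G \<and> bij_betw T (fdual F) G \<and>
           (\<forall>f\<in>fdual F. \<forall>g\<in>fdual F. T (\<lambda>x. f x + g x) = (\<lambda>n. T f n + T g n)) \<and>
           (\<forall>c. \<forall>f\<in>fdual F. T (\<lambda>x. c * f x) = (\<lambda>n. c * T f n)) \<and>
           (\<forall>f\<in>fdual F. l1norm (T f) = dualnorm F f) \<and>
           k \<ge> 1 \<and> k_strictly_convex_l1 G k"
proof -
  have Fb: "\<And>x. x \<in> F \<Longrightarrow> bnd x" using assms(1) c0_bnd by auto
  have subF: "subspace F"
    using assms(2)[unfolded is_subspace_def lam_plus lam_scale lam_zero] unfolding subspace_def by blast
  obtain B where B: "finite B" "F \<subseteq> {(\<lambda>n. \<Sum>b\<in>B. c b * b n) | c. True}"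
    using assms(3) unfolding finite_dim_def by auto
  have FB: "F \<subseteq> span B"
  proof
    fix x assume "x \<in> F"
    then obtain c where "x = (\<lambda>n. \<Sum>b\<in>B. c b * b n)" using B by auto
    also have "\<dots> = (\<Sum>b\<in>B. c b *\<^sub>R b)" by (simp add: fun_eq_iff fun_sum_apply)
    also have "\<dots> \<in> span B" by (intro span_sum span_scale span_base)
    finally show "x \<in> span B" .
  qed
  obtain Y where Y: "Y \<subseteq> F" "independent Y" "F \<subseteq> span Y" "card Y = dim F" using basis_exists by blast
  have finY: "finite Y" using independent_span_bound[OF B(1) Y(2)] Y(1) FB by auto
  have Yb: "\<forall>y\<in>Y. bnd y" using Y(1) Fb by auto
  obtain u where ul1: "\<forall>y\<in>Y. u y \<in> l1" and ub: "\<forall>y\<in>Y. \<forall>y'\<in>Y. pair (u y) y' = (if y = y' then 1 else 0)"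
    using biorth[OF finY Y(2) Yb] by blast
  have Frep: "\<exists>cx. x = (\<Sum>y\<in>Y. cx y *\<^sub>R y)" if "x \<in> F" for x
    using that Y(3) span_finite[OF finY] by auto

  obtain P where Pl1: "\<forall>a\<in>l1. P a \<in> l1" and Plin: "linear_on_l1 P" and Pid: "\<forall>a\<in>l1. P (P a) = P a"
     and Pn: "opnorm_l1_eq_1 P" and Pk: "{a \<in> l1. P a = (\<lambda>n. 0)} = annihilator F"
    using assms(4) unfolding is_ideal_c0_def by blast
  have Plin': "(\<forall>a\<in>l1. \<forall>b\<in>l1. P (a + b) = P a + P b) \<and> (\<forall>c. \<forall>a\<in>l1. P (c *\<^sub>R a) = c *\<^sub>R P a)"
    using Plin[unfolded linear_on_l1_def lam_plus lam_scale] .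
  have Padd: "P (a + b) = P a + P b" if "a \<in> l1" "b \<in> l1" for a b using Plin' that by blast
  have Pscale: "P (c *\<^sub>R a) = c *\<^sub>R P a" if "a \<in> l1" for a c using Plin' that by blast
  have P0: "P 0 = 0" using Pscale[OF l1_zero, of 0] by simp
  have Pdiff: "P (a - b) = P a - P b" if "a \<in> l1" "b \<in> l1" for a b
  proof -
    have "a - b = a + (-1) *\<^sub>R b" by simp
    then have "P (a - b) = P (a + (-1) *\<^sub>R b)" by (rule arg_cong)
    also have "\<dots> = P a + P ((-1) *\<^sub>R b)" using that by (intro Padd l1_scale)
    also have "P ((-1) *\<^sub>R b) = (-1) *\<^sub>R P b" using that by (intro Pscale)
    finally show ?thesis by (metis diff_conv_add_uminus scaleR_minus1_left)
  qed
  have Pker: "P a = 0" if "a \<in> l1" "\<forall>y\<in>F. pair a y = 0" for a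
  proof -
    have "a \<in> annihilator F" using that unfolding annihilator_def by simp
    then have "a \<in> {a \<in> l1. P a = (\<lambda>n. 0)}" using Pk by simp
    then show ?thesis by (simp add: lam_zero)
  qed
  have Pker2: "pair a y = 0" if "a \<in> l1" "P a = 0" "y \<in> F" for a y
  proof -
    have "a \<in> {a \<in> l1. P a = (\<lambda>n. 0)}" using that by (simp add: lam_zero)
    then have "a \<in> annihilator F" using Pk by simp
    then show ?thesis using that(3) unfolding annihilator_def by simp
  qed
  have unit: "l1norm (P b) \<le> 1" if "b \<in> l1" "l1norm b \<le> 1" for b
  proof -
    have bd: "bdd_above {l1norm (P a) | a. a \<in> l1 \<and> l1norm a \<le> 1}"
      and sp: "Sup {l1norm (P a) | a. a \<in> l1 \<and> l1norm a \<le> 1} = 1" using Pn unfolding opnorm_l1_eq_1_def by auto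
    have mem: "l1norm (P b) \<in> {l1norm (P a) | a. a \<in> l1 \<and> l1norm a \<le> 1}" using that by blast
    have "l1norm (P b) \<le> Sup {l1norm (P a) | a. a \<in> l1 \<and> l1norm a \<le> 1}" by (rule cSup_upper[OF mem bd])
    then show ?thesis unfolding sp .
  qed
  have Pcontr: "l1norm (P a) \<le> l1norm a" if a: "a \<in> l1" for a
  proof (cases "l1norm a = 0")
    case True then have "a = 0" using l1norm_zero_iff[OF a] by simp
    then show ?thesis using P0 by simp
  next
    case False
    define n where "n = l1norm a"
    have na: "l1norm a = n" unfolding n_def ..
    have n: "n > 0" using False l1norm_nonneg[OF a] unfolding n_def by simp
    have bl1: "(1/n) *\<^sub>R a \<in> l1" using a by (rule l1_scale)
    have "l1norm ((1/n) *\<^sub>R a) = 1" using l1norm_scale[OF a, of "1/n"] n na by simp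
    then have "l1norm (P ((1/n) *\<^sub>R a)) \<le> 1" using unit bl1 by simp
    moreover have "P ((1/n) *\<^sub>R a) = (1/n) *\<^sub>R P a" using Pscale a by simp
    moreover have "l1norm ((1/n) *\<^sub>R P a) = (1/n) * l1norm (P a)" using l1norm_scale Pl1 a n by simp
    ultimately have "(1/n) * l1norm (P a) \<le> 1" by simp
    then have "l1norm (P a) \<le> n" using n by (simp add: field_simps)
    then show ?thesis using na by simp
  qed
  have Psum: "P (\<Sum>i\<in>I. c i *\<^sub>R a i) = (\<Sum>i\<in>I. c i *\<^sub>R P (a i))" if "\<And>i. i \<in> I \<Longrightarrow> a i \<in> l1" for I c a
  proof -
    have "P (\<Sum>i\<in>I. c i *\<^sub>R a i) = (\<Sum>i\<in>I. P (c i *\<^sub>R a i))"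
      by (rule vlin_sum[OF Padd P0 subspace_l1]) (use that in \<open>auto intro: l1_scale\<close>)
    also have "\<dots> = (\<Sum>i\<in>I. c i *\<^sub>R P (a i))" using that by (intro sum.cong) (auto simp: Pscale)
    finally show ?thesis .
  qed
  have PuL1: "P (u y) \<in> l1" if "y \<in> Y" for y using Pl1 ul1 that by auto

  have Decomp: "P b = (\<Sum>y\<in>Y. pair b y *\<^sub>R P (u y))" if b: "b \<in> l1" for b
  proof -
    define r where "r = b - (\<Sum>y\<in>Y. pair b y *\<^sub>R u y)"
    have sl1: "(\<Sum>y\<in>Y. pair b y *\<^sub>R u y) \<in> l1" using ul1 by (auto intro!: l1_sum l1_scale)
    have rl1: "r \<in> l1" unfolding r_def using b sl1 by (rule l1_diff)
    have ry: "pair r y' = 0" if y': "y' \<in> Y" for y'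
    proof -
      have by': "bnd y'" using Yb y' by auto
      have "pair r y' = pair b y' - (\<Sum>y\<in>Y. pair b y * pair (u y) y')"
        unfolding r_def using b sl1 by' ul1 by (simp add: pair_diff_left pair_sum_left l1_scale pair_scale_left)
      also have "(\<Sum>y\<in>Y. pair b y * pair (u y) y') = (\<Sum>y\<in>Y. if y = y' then pair b y' else 0)"
        using ub y' by (intro sum.cong) auto
      also have "\<dots> = pair b y'" using y' finY by (simp add: sum.delta)
      finally show ?thesis by simp
    qed
    have "\<forall>x\<in>F. pair r x = 0"
    proof
      fix x assume "x \<in> F"
      then obtain cx where x: "x = (\<Sum>y\<in>Y. cx y *\<^sub>R y)" using Frep by blast
      have "pair r x = (\<Sum>y\<in>Y. pair r (cx y *\<^sub>R y))" unfolding x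
        by (rule pair_sum_right) (use rl1 Yb in \<open>auto intro: bnd_scale\<close>)
      also have "\<dots> = (\<Sum>y\<in>Y. cx y * pair r y)" using rl1 Yb by (intro sum.cong) (auto simp: pair_scale_right)
      also have "\<dots> = 0" using ry by simp
      finally show "pair r x = 0" .
    qed
    then have "P r = 0" using Pker rl1 by blast
    moreover have "P r = P b - (\<Sum>y\<in>Y. pair b y *\<^sub>R P (u y))"
      unfolding r_def using Pdiff[OF b sl1] Psum[of Y u "\<lambda>y. pair b y"] ul1 by simp
    ultimately show ?thesis by simp
  qed

  define T where "T f = (\<Sum>y\<in>Y. f y *\<^sub>R P (u y))" for f :: "(nat \<Rightarrow> real) \<Rightarrow> real"
  define af where "af f = (\<Sum>y\<in>Y. f y *\<^sub>R u y)" for f :: "(nat \<Rightarrow> real) \<Rightarrow> real"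
  have afl1: "af f \<in> l1" for f using ul1 unfolding af_def by (auto intro!: l1_sum l1_scale)
  have Tl1: "T f \<in> l1" for f unfolding T_def using PuL1 by (auto intro!: l1_sum l1_scale)
  have PaT: "P (af f) = T f" for f unfolding af_def T_def using Psum[of Y u f] ul1 by simp
  have flin: "linon F f" if "f \<in> fdual F" for f
    using that[unfolded fdual_def mem_Collect_eq lam_plus lam_scale] unfolding linon_def by blast
  have foff: "f x = 0" if "f \<in> fdual F" "x \<notin> F" for f x using that unfolding fdual_def by auto
  have pairT: "pair (T f) x = f x" if f: "f \<in> fdual F" and x: "x \<in> F" for f x
  proof -
    obtain cx where xr: "x = (\<Sum>y\<in>Y. cx y *\<^sub>R y)" using Frep x by blast
    have bx: "bnd x" using Fb x by auto
    have p1: "pair (af f) y' = f y'" if y': "y' \<in> Y" for y'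
    proof -
      have "pair (af f) y' = (\<Sum>y\<in>Y. f y * pair (u y) y')"
        unfolding af_def using ul1 Yb y' by (simp add: pair_sum_left l1_scale pair_scale_left)
      also have "\<dots> = (\<Sum>y\<in>Y. if y = y' then f y' else 0)" using ub y' by (intro sum.cong) auto
      also have "\<dots> = f y'" using y' finY by (simp add: sum.delta)
      finally show ?thesis .
    qed
    have "pair (af f) x = (\<Sum>y\<in>Y. pair (af f) (cx y *\<^sub>R y))" unfolding xr
      by (rule pair_sum_right) (use afl1 Yb in \<open>auto intro: bnd_scale\<close>)
    also have "\<dots> = (\<Sum>y\<in>Y. cx y * pair (af f) y)" using afl1 Yb by (intro sum.cong) (auto simp: pair_scale_right)
    also have "\<dots> = (\<Sum>y\<in>Y. cx y * f y)" using p1 by simp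
    also have "\<dots> = f x"
    proof -
      have "f x = (\<Sum>y\<in>Y. f (cx y *\<^sub>R y))" unfolding xr
        by (rule linon_sum[OF flin[OF f] subF]) (use Y(1) subF in \<open>auto intro: subspace_scale\<close>)
      also have "\<dots> = (\<Sum>y\<in>Y. cx y * f y)" using flin[OF f] Y(1) unfolding linon_def by (intro sum.cong) auto
      finally show ?thesis by simp
    qed
    finally have e1: "pair (af f) x = f x" .
    have Pafl1: "P (af f) \<in> l1" using Pl1 afl1 by auto
    have "P (af f - P (af f)) = 0" using Pdiff[OF afl1 Pafl1] Pid afl1 by simp
    then have "pair (af f - P (af f)) x = 0" using Pker2 afl1 Pafl1 x by (auto intro: l1_diff)
    then have "pair (af f) x = pair (P (af f)) x" using pair_diff_left[OF afl1 Pafl1 bx] by simp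
    then show ?thesis using e1 PaT by simp
  qed
  have dn: "l1norm (T f) = dualnorm F f" if f: "f \<in> fdual F" for f
  proof -
    define D where "D = {\<bar>f x\<bar> | x. x \<in> F \<and> supnorm x \<le> 1}"
    define d where "d = Sup D"
    have dd: "dualnorm F f = d" unfolding dualnorm_def d_def D_def ..
    have f0: "f 0 = 0"
    proof -
      have "f 0 = f (0 *\<^sub>R 0)" by simp
      also have "\<dots> = 0" using flin[OF f] subspace_0[OF subF] unfolding linon_def by fastforce
      finally show ?thesis .
    qed
    have sn0: "supnorm 0 = 0" using supnorm_zero_iff[OF bnd_zero] by simp
    have D0: "0 \<in> D" unfolding D_def using subspace_0[OF subF] sn0 f0 by force
    have Dle: "\<bar>f x\<bar> \<le> l1norm (T f) * supnorm x" if x: "x \<in> F" for x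
      using pair_bound[OF Tl1[of f] Fb[OF x]] pairT[OF f x] by simp
    have Dbdd: "bdd_above D"
      unfolding bdd_above_def
    proof (intro exI ballI)
      fix t assume "t \<in> D"
      then obtain x where x: "x \<in> F" "supnorm x \<le> 1" "t = \<bar>f x\<bar>" unfolding D_def by auto
      have "l1norm (T f) * supnorm x \<le> l1norm (T f) * 1"
        using x(2) l1norm_nonneg[OF Tl1[of f]] by (intro mult_left_mono) auto
      then show "t \<le> l1norm (T f)" using Dle[OF x(1)] x(3) by simp
    qed
    have ge: "d \<le> l1norm (T f)"
      unfolding d_def
    proof (rule cSup_least)
      show "D \<noteq> {}" using D0 by auto
      fix t assume "t \<in> D"
      then obtain x where x: "x \<in> F" "supnorm x \<le> 1" "t = \<bar>f x\<bar>" unfolding D_def by auto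
      have "l1norm (T f) * supnorm x \<le> l1norm (T f) * 1"
        using x(2) l1norm_nonneg[OF Tl1[of f]] by (intro mult_left_mono) auto
      then show "t \<le> l1norm (T f)" using Dle[OF x(1)] x(3) by simp
    qed
    have d0: "0 \<le> d" unfolding d_def using D0 Dbdd by (rule cSup_upper)
    have fb: "\<bar>f x\<bar> \<le> d * supnorm x" if x: "x \<in> F" for x
    proof (cases "supnorm x = 0")
      case True
      then have "x = 0" using supnorm_zero_iff[OF Fb[OF x]] by simp
      then show ?thesis using f0 True by simp
    next
      case False
      define s where "s = supnorm x"
      have s: "s > 0" using False supnorm_nonneg[OF Fb[OF x]] unfolding s_def by simp
      have x'F: "(1 / s) *\<^sub>R x \<in> F" using x subF by (simp add: subspace_scale)
      have "supnorm ((1 / s) *\<^sub>R x) = (1 / s) * s"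
        using supnorm_scale[OF Fb[OF x], of "1 / s"] s unfolding s_def by simp
      then have "supnorm ((1 / s) *\<^sub>R x) \<le> 1" using s by simp
      then have "\<bar>f ((1 / s) *\<^sub>R x)\<bar> \<in> D" unfolding D_def using x'F by blast
      then have "\<bar>f ((1 / s) *\<^sub>R x)\<bar> \<le> d" unfolding d_def using Dbdd by (rule cSup_upper)
      moreover have "f ((1 / s) *\<^sub>R x) = (1 / s) * f x" using flin[OF f] x unfolding linon_def by blast
      ultimately have "(1 / s) * \<bar>f x\<bar> \<le> d" using s by (simp add: abs_mult)
      then show ?thesis using s unfolding s_def[symmetric] by (simp add: field_simps)
    qed
    define p where "p v = d * supnorm v" for v
    have padd: "p (a + b) \<le> p a + p b" if "a \<in> {x. bnd x}" "b \<in> {x. bnd x}" for a b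
    proof -
      have "d * supnorm (a + b) \<le> d * (supnorm a + supnorm b)"
        using supnorm_add[of a b] that d0 by (intro mult_left_mono) auto
      then show ?thesis unfolding p_def by (simp add: distrib_left)
    qed
    have pscale: "p (c *\<^sub>R a) = c * p a" if "c \<ge> 0" "a \<in> {x. bnd x}" for c a
      using supnorm_scale[of a c] that unfolding p_def by simp
    have FW: "F \<subseteq> {x. bnd x}" using Fb by auto
    have fp: "f x \<le> p x" if "x \<in> F" for x using fb[OF that] unfolding p_def by simp
    have bound_M: "l1norm (T f) \<le> d + (\<Sum>y\<in>Y. d * supnorm (\<lambda>n. if n < M then 0 else y n) * l1norm (P (u y)))" for M
    proof -
      define Z where "Z = ee ` {..<M}"
      have Z: "finite Z" "Z \<subseteq> {x. bnd x}" unfolding Z_def using ee_bnd by auto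
      obtain g where g: "linon (span (Z \<union> F)) g" "\<forall>x\<in>F. g x = f x" "\<forall>x\<in>span (Z \<union> F). g x \<le> p x"
        using hb_fin[OF subspace_bnd padd pscale subF FW flin[OF f] fp Z] by blast
      define V where "V = span (Z \<union> F)"
      have gV: "linon V g" using g(1) unfolding V_def .
      have subV: "subspace V" unfolding V_def by (rule subspace_span)
      have VW: "V \<subseteq> {x. bnd x}" unfolding V_def using Z(2) FW subspace_bnd by (intro span_minimal) auto
      have eeV: "ee n \<in> V" if "n < M" for n unfolding V_def Z_def using that by (intro span_base) auto
      have FV: "F \<subseteq> V" unfolding V_def by (meson span_superset Un_upper2 order_trans)
      have gabs: "\<bar>g v\<bar> \<le> d * supnorm v" if v: "v \<in> V" for v
      proof -
        have mv: "(-1) *\<^sub>R v \<in> V" using subV v by (rule subspace_scale)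
        have h1: "g v \<le> d * supnorm v" using g(3) v unfolding V_def p_def by auto
        have h2: "g ((-1) *\<^sub>R v) \<le> d * supnorm ((-1) *\<^sub>R v)" using g(3) mv unfolding V_def p_def by auto
        have h3: "g ((-1) *\<^sub>R v) = - g v" using gV v unfolding linon_def by (metis mult_minus1)
        have h4: "supnorm ((-1) *\<^sub>R v) = supnorm v" using supnorm_scale[of v "-1"] VW v by auto
        have h5: "- g v \<le> d * supnorm v" using h2 unfolding h3 h4 .
        show ?thesis unfolding abs_le_iff using h1 h5 by blast
      qed
      define aM where "aM = (\<Sum>n<M. g (ee n) *\<^sub>R ee n)"
      have aMl1: "aM \<in> l1" unfolding aM_def by (auto intro!: l1_sum l1_scale ee_l1)
      have aMapp: "aM k = (if k < M then g (ee k) else 0)" for k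
      proof -
        have "aM k = (\<Sum>n\<in>{..<M}. g (ee n) * ee n k)" unfolding aM_def by (simp add: fun_sum_apply)
        also have "\<dots> = (\<Sum>n\<in>{..<M}. if n = k then g (ee k) else 0)" by (rule sum.cong) (auto simp: ee_def)
        also have "\<dots> = (if k < M then g (ee k) else 0)" by (simp add: sum.delta')
        finally show ?thesis .
      qed
      have l1aM: "l1norm aM = (\<Sum>n<M. \<bar>g (ee n)\<bar>)"
      proof -
        have "l1norm aM = (\<Sum>n<M. \<bar>aM n\<bar>)" using l1_fin[of M aM] aMapp by auto
        also have "\<dots> = (\<Sum>n<M. \<bar>g (ee n)\<bar>)" using aMapp by (intro sum.cong) auto
        finally show ?thesis .
      qed
      define sv where "sv = (\<Sum>n<M. sgn (g (ee n)) *\<^sub>R ee n)"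
      have svV: "sv \<in> V" unfolding sv_def using subV eeV by (intro subspace_sum subspace_scale) auto
      have gsv: "g sv = (\<Sum>n<M. \<bar>g (ee n)\<bar>)"
      proof -
        have "g sv = (\<Sum>n<M. g (sgn (g (ee n)) *\<^sub>R ee n))" unfolding sv_def
          by (rule linon_sum[OF gV subV]) (use subV eeV in \<open>auto intro: subspace_scale\<close>)
        also have "\<dots> = (\<Sum>n<M. sgn (g (ee n)) * g (ee n))" using gV eeV unfolding linon_def by (intro sum.cong) auto
        also have "\<dots> = (\<Sum>n<M. \<bar>g (ee n)\<bar>)" by (simp add: sgn_times_self)
        finally show ?thesis .
      qed
      have svapp: "\<bar>sv k\<bar> \<le> 1" for k
      proof -
        have "sv k = (\<Sum>n\<in>{..<M}. sgn (g (ee n)) * ee n k)" unfolding sv_def by (simp add: fun_sum_apply)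
        also have "\<dots> = (\<Sum>n\<in>{..<M}. if n = k then sgn (g (ee k)) else 0)" by (rule sum.cong) (auto simp: ee_def)
        also have "\<dots> = (if k < M then sgn (g (ee k)) else 0)" by (simp add: sum.delta')
        finally show ?thesis by (simp add: abs_sgn)
      qed
      have "supnorm sv \<le> 1" by (rule supnorm_le) (rule svapp)
      have l1aM_le: "l1norm aM \<le> d"
      proof -
        have "l1norm aM = g sv" using l1aM gsv by simp
        also have "\<dots> \<le> d * supnorm sv" using gabs[OF svV] by simp
        also have "\<dots> \<le> d * 1" using \<open>supnorm sv \<le> 1\<close> d0 by (intro mult_left_mono)
        finally show ?thesis by simp
      qed
      have PaM: "l1norm (P aM) \<le> d" using Pcontr[OF aMl1] l1aM_le by simp
      have err: "\<bar>f y - pair aM y\<bar> \<le> d * supnorm (\<lambda>n. if n < M then 0 else y n)" if y: "y \<in> Y" for y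
      proof -
        have yF: "y \<in> F" using Y(1) y by auto
        have yb: "bnd y" using Fb yF by auto
        define tr where "tr = (\<Sum>n<M. y n *\<^sub>R ee n)"
        have trV: "tr \<in> V" unfolding tr_def using subV eeV by (intro subspace_sum subspace_scale) auto
        have A1: "pair aM y = (\<Sum>n<M. g (ee n) * y n)"
        proof -
          have "pair aM y = (\<Sum>n<M. pair (g (ee n) *\<^sub>R ee n) y)" unfolding aM_def
            by (rule pair_sum_left) (auto intro: l1_scale ee_l1 yb)
          also have "\<dots> = (\<Sum>n<M. g (ee n) * y n)" using yb by (simp add: pair_scale_left ee_l1 pair_ee)
          finally show ?thesis .
        qed
        have A2: "g tr = (\<Sum>n<M. y n * g (ee n))"
        proof -
          have "g tr = (\<Sum>n<M. g (y n *\<^sub>R ee n))" unfolding tr_def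
            by (rule linon_sum[OF gV subV]) (use subV eeV in \<open>auto intro: subspace_scale\<close>)
          also have "\<dots> = (\<Sum>n<M. y n * g (ee n))" using gV eeV unfolding linon_def by (intro sum.cong) auto
          finally show ?thesis .
        qed
        have trapp: "tr k = (if k < M then y k else 0)" for k
        proof -
          have "tr k = (\<Sum>n\<in>{..<M}. y n * ee n k)" unfolding tr_def by (simp add: fun_sum_apply)
          also have "\<dots> = (\<Sum>n\<in>{..<M}. if n = k then y k else 0)" by (rule sum.cong) (auto simp: ee_def)
          also have "\<dots> = (if k < M then y k else 0)" by (simp add: sum.delta')
          finally show ?thesis .
        qed
        have diff: "y + (-1) *\<^sub>R tr = (\<lambda>n. if n < M then 0 else y n)"
          by (rule ext) (simp add: trapp)
        have mtrV: "(-1) *\<^sub>R tr \<in> V" using subV trV by (rule subspace_scale)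
        have yV: "y \<in> V" using FV yF by auto
        have "g (y + (-1) *\<^sub>R tr) = g y + g ((-1) *\<^sub>R tr)" using gV yV mtrV unfolding linon_def by blast
        also have "g ((-1) *\<^sub>R tr) = - g tr" using gV trV unfolding linon_def by (metis mult_minus1)
        also have "g y = f y" using g(2) yF by simp
        finally have calc: "g (y + (-1) *\<^sub>R tr) = f y + - g tr" .
        have A3: "pair aM y = g tr" using A1 A2 by (simp add: mult.commute)
        have "f y - pair aM y = g (y + (-1) *\<^sub>R tr)" using calc A3 by linarith
        moreover have "y + (-1) *\<^sub>R tr \<in> V" using subV yV mtrV by (rule subspace_add)
        ultimately have "\<bar>f y - pair aM y\<bar> \<le> d * supnorm (y + (-1) *\<^sub>R tr)" using gabs by simp
        then show ?thesis unfolding diff .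
      qed
      have TmP: "T f - P aM = (\<Sum>y\<in>Y. (f y - pair aM y) *\<^sub>R P (u y))"
        unfolding T_def Decomp[OF aMl1] by (simp add: scaleR_diff_left sum_subtractf)
      have "l1norm (T f - P aM) \<le> (\<Sum>y\<in>Y. l1norm ((f y - pair aM y) *\<^sub>R P (u y)))"
        unfolding TmP by (rule l1norm_sum) (use PuL1 in \<open>auto intro: l1_scale\<close>)
      also have "\<dots> = (\<Sum>y\<in>Y. \<bar>f y - pair aM y\<bar> * l1norm (P (u y)))"
        using PuL1 by (intro sum.cong) (auto simp: l1norm_scale)
      also have "\<dots> \<le> (\<Sum>y\<in>Y. d * supnorm (\<lambda>n. if n < M then 0 else y n) * l1norm (P (u y)))"
        using err PuL1 l1norm_nonneg by (intro sum_mono mult_right_mono) auto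
      finally have e2: "l1norm (T f - P aM) \<le> (\<Sum>y\<in>Y. d * supnorm (\<lambda>n. if n < M then 0 else y n) * l1norm (P (u y)))" .
      have PaMl1: "P aM \<in> l1" using Pl1 aMl1 by auto
      have "l1norm (P aM + (T f - P aM)) \<le> l1norm (P aM) + l1norm (T f - P aM)"
        using PaMl1 Tl1 by (intro l1norm_add l1_diff) auto
      moreover have "P aM + (T f - P aM) = T f" by simp
      ultimately have "l1norm (T f) \<le> l1norm (P aM) + l1norm (T f - P aM)" by simp
      then show ?thesis using PaM e2 by linarith
    qed
    have lim: "(\<lambda>M. d + (\<Sum>y\<in>Y. d * supnorm (\<lambda>n. if n < M then 0 else y n) * l1norm (P (u y))))
        \<longlonglongrightarrow> d + (\<Sum>y\<in>Y. d * 0 * l1norm (P (u y)))"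
      by (intro tendsto_intros tail_lim) (use Y(1) assms(1) in auto)
    then have lim': "(\<lambda>M. d + (\<Sum>y\<in>Y. d * supnorm (\<lambda>n. if n < M then 0 else y n) * l1norm (P (u y))))
        \<longlonglongrightarrow> d" by simp
    have le: "l1norm (T f) \<le> d" using bound_M by (intro LIMSEQ_le_const[OF lim']) auto
    show ?thesis using ge le dd by simp
  qed
  have fd_add: "(\<lambda>x. f x + g x) \<in> fdual F" if "f \<in> fdual F" "g \<in> fdual F" for f g
    using that unfolding fdual_def by (auto simp: algebra_simps)
  have fd_scale: "(\<lambda>x. c * f x) \<in> fdual F" if "f \<in> fdual F" for c f
    using that unfolding fdual_def by (auto simp: algebra_simps)
  have fd_zero: "(\<lambda>x. 0) \<in> fdual F" unfolding fdual_def by simp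
  have T_add: "T (\<lambda>x. f x + g x) = T f + T g" for f g unfolding T_def by (simp add: scaleR_add_left sum.distrib)
  have T_scale: "T (\<lambda>x. c * f x) = c *\<^sub>R T f" for c f unfolding T_def by (simp add: scaleR_sum_right)
  have T_zero: "T (\<lambda>x. 0) = 0" unfolding T_def by simp
  define G where "G = T ` fdual F"
  have inj: "inj_on T (fdual F)"
  proof (rule inj_onI)
    fix f g assume f: "f \<in> fdual F" and g: "g \<in> fdual F" and e: "T f = T g"
    show "f = g"
    proof
      fix x show "f x = g x"
      proof (cases "x \<in> F")
        case True then show ?thesis using pairT[OF f True] pairT[OF g True] e by simp
      next
        case False then show ?thesis using foff[OF f False] foff[OF g False] by simp
      qed
    qed
  qed
  have GS: "G \<subseteq> span ((\<lambda>y. P (u y)) ` Y)"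
  proof
    fix v assume "v \<in> G"
    then obtain f where "v = T f" unfolding G_def by auto
    have t: "f y *\<^sub>R P (u y) \<in> span ((\<lambda>y. P (u y)) ` Y)" if "y \<in> Y" for y
      by (rule span_scale, rule span_base, rule imageI, rule that)
    have "T f \<in> span ((\<lambda>y. P (u y)) ` Y)" unfolding T_def by (rule span_sum) (rule t)
    then show "v \<in> span ((\<lambda>y. P (u y)) ` Y)" using \<open>v = T f\<close> by simp
  qed
  define k where "k = card Y + 1"
  have kconv: "k_strictly_convex_l1 G k"
    unfolding k_strictly_convex_l1_def
  proof (intro allI impI)
    fix x :: "nat \<Rightarrow> nat \<Rightarrow> real"
    assume h: "(\<forall>i\<le>k. x i \<in> G \<and> l1norm (x i) = 1) \<and>
        (\<forall>c. (\<lambda>n. \<Sum>i\<le>k. c i * x i n) = (\<lambda>n. 0) \<longrightarrow> (\<forall>i\<le>k. c i = 0))"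
    have xG: "\<And>i. i \<le> k \<Longrightarrow> x i \<in> G" using h by auto
    have ind: "\<forall>i\<le>k. c i = 0" if c: "(\<Sum>i\<le>k. c i *\<^sub>R x i) = 0" for c
    proof -
      have "\<forall>n. (\<Sum>i\<le>k. c i *\<^sub>R x i) n = 0" using c by simp
      then have "(\<lambda>n. \<Sum>i\<le>k. c i * x i n) = (\<lambda>n. 0)" by (simp add: fun_eq_iff fun_sum_apply)
      then show ?thesis using h by blast
    qed
    have injx: "inj_on x {..k}"
    proof (rule inj_onI, rule ccontr)
      fix i j assume i: "i \<in> {..k}" and j: "j \<in> {..k}" and e: "x i = x j" and ne: "i \<noteq> j"
      define c where "c l = (if l = i then 1 else if l = j then -1 else (0::real))" for l
      have "(\<Sum>l\<le>k. c l *\<^sub>R x l) = (\<Sum>l\<le>k. (if l = i then x i else 0) - (if l = j then x j else 0))"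
        by (rule sum.cong) (auto simp: c_def ne)
      also have "\<dots> = x i - x j" using i j by (simp add: sum_subtractf sum.delta)
      also have "\<dots> = 0" using e by simp
      finally have "\<forall>l\<le>k. c l = 0" by (rule ind)
      then show False using i c_def by auto
    qed
    define X where "X = x ` {..k}"
    have cardX: "card X = k + 1" unfolding X_def using card_image[OF injx] by simp
    have indX: "independent X"
    proof (rule independent_if_scalars_zero)
      show "finite X" unfolding X_def by simp
      fix cc v assume s: "(\<Sum>v\<in>X. cc v *\<^sub>R v) = 0" and v: "v \<in> X"
      have "(\<Sum>i\<le>k. cc (x i) *\<^sub>R x i) = (\<Sum>v\<in>X. cc v *\<^sub>R v)"
        unfolding X_def using sum.reindex[OF injx, of "\<lambda>v. cc v *\<^sub>R v"] by simp
      then have "(\<Sum>i\<le>k. cc (x i) *\<^sub>R x i) = 0" using s by simp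
      then have "\<forall>i\<le>k. cc (x i) = 0" by (rule ind)
      then show "cc v = 0" using v unfolding X_def by auto
    qed
    have XS: "X \<subseteq> span ((\<lambda>y. P (u y)) ` Y)" using xG GS unfolding X_def by auto
    have "card X \<le> card ((\<lambda>y. P (u y)) ` Y)"
      using independent_span_bound[OF finite_imageI[OF finY] indX XS] by simp
    also have "\<dots> \<le> card Y" by (rule card_image_le[OF finY])
    finally show "l1norm (\<lambda>n. \<Sum>i\<le>k. x i n) < real k + 1" using cardX k_def by simp
  qed
  show ?thesis
  proof (intro exI[of _ G] exI[of _ T] exI[of _ k] conjI)
    show "G \<subseteq> l1" unfolding G_def using Tl1 by auto
    show "is_subspace G" unfolding is_subspace_def G_def lam_plus lam_scale lam_zero
    proof (intro conjI ballI allI)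
      show "0 \<in> T ` fdual F" by (rule image_eqI[where f=T, OF T_zero[symmetric] fd_zero])
    next
      fix a b assume "a \<in> T ` fdual F" "b \<in> T ` fdual F"
      then obtain f g where fg: "f \<in> fdual F" "g \<in> fdual F" "a = T f" "b = T g" by auto
      then have e: "a + b = T (\<lambda>x. f x + g x)" using T_add by simp
      show "a + b \<in> T ` fdual F" by (rule image_eqI[where f=T, OF e fd_add[OF fg(1,2)]])
    next
      fix c a assume "a \<in> T ` fdual F"
      then obtain f where fa: "f \<in> fdual F" "a = T f" by auto
      then have e: "c *\<^sub>R a = T (\<lambda>x. c * f x)" using T_scale by simp
      show "c *\<^sub>R a \<in> T ` fdual F" by (rule image_eqI[where f=T, OF e fd_scale[OF fa(1)]])
    qed
    show "bij_betw T (fdual F) G" unfolding G_def bij_betw_def using inj by simp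
    show "\<forall>f\<in>fdual F. \<forall>g\<in>fdual F. T (\<lambda>x. f x + g x) = (\<lambda>n. T f n + T g n)"
      using T_add by (simp add: lam_plus)
    show "\<forall>c. \<forall>f\<in>fdual F. T (\<lambda>x. c * f x) = (\<lambda>n. c * T f n)" using T_scale by (simp add: lam_scale)
    show "\<forall>f\<in>fdual F. l1norm (T f) = dualnorm F f" using dn by simp
    show "1 \<le> k" unfolding k_def by simp
    show "k_strictly_convex_l1 G k" by (rule kconv)
  qed
qed

end
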